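(* Let $w$ be a permutation with $\{k,k+1\}\subseteq\textsf{supp}(w)$. Then exactly one of the following holds: (i) $w$ has a reduced word of the form $\cdots k\cdots(k+1)\cdots k\cdots$ or of the form $\cdots(k+1)\cdots k\cdots(k+1)\cdots$; (ii) $w$ has a reduced word of the form (a word in letters $\le k$)(a word in letters $\ge k+1$) or of the form (a word in letters $\ge k+1$)(a word in letters $\le k$).
   Context: $\sigma_i=(i,i+1)$; reduced words are sequences of subscripts of reduced expressions of a permutation as products of the $\sigma_i$. $\textsf{supp}(w)$ is the set of letters appearing in reduced words of $w$. *)

theory Defs
  imports Main
begin

text \<open>Permutations of the positive integers with finite support (0 is fixed and unused).\<close>
definition fin_perm :: "(nat \<Rightarrow> nat) \<Rightarrow> bool" where
  "fin_perm w \<longleftrightarrow> bij w \<and> finite {i. w i \<noteq> i} \<and> w 0 = 0"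

definition sigma :: "nat \<Rightarrow> nat \<Rightarrow> nat" where
  "sigma i = (\<lambda>x. if x = i then Suc i else if x = Suc i then i else x)"

definition is_word :: "nat list \<Rightarrow> bool" where
  "is_word a \<longleftrightarrow> (\<forall>x\<in>set a. 1 \<le> x)"

definition word_perm :: "nat list \<Rightarrow> nat \<Rightarrow> nat" where
  "word_perm a = foldr (\<lambda>i f. sigma i \<circ> f) a id"

definition reduced_word :: "(nat \<Rightarrow> nat) \<Rightarrow> nat list \<Rightarrow> bool" where
  "reduced_word w a \<longleftrightarrow> is_word a \<and> word_perm a = w \<and>
     (\<forall>b. is_word b \<and> word_perm b = w \<longrightarrow> length a \<le> length b)"

definition supp :: "(nat \<Rightarrow> nat) \<Rightarrow> nat set" where
  "supp w = {x. \<exists>a. reduced_word w a \<and> x \<in> set a}"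

definition has_pattern :: "nat list \<Rightarrow> nat \<Rightarrow> nat \<Rightarrow> bool" where
  "has_pattern a x y \<longleftrightarrow> (\<exists>p q r. p < q \<and> q < r \<and> r < length a \<and>
      a ! p = x \<and> a ! q = y \<and> a ! r = x)"

end

theory Submission
  imports Defs
begin

lemma sigma_sigma[simp]: "sigma i (sigma i x) = x" by (auto simp: sigma_def)
lemma sigma_i[simp]: "sigma i i = Suc i" by (simp add: sigma_def)
lemma sigma_Suc_i[simp]: "sigma i (Suc i) = i" by (simp add: sigma_def)
lemma sigma_other: "x \<noteq> i \<Longrightarrow> x \<noteq> Suc i \<Longrightarrow> sigma i x = x" by (simp add: sigma_def)
lemma sigma_eq_i[simp]: "sigma i x = i \<longleftrightarrow> x = Suc i" by (auto simp: sigma_def)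
lemma sigma_eq_Suc_i[simp]: "sigma i x = Suc i \<longleftrightarrow> x = i" by (auto simp: sigma_def)
lemma sigma_comp_sigma[simp]: "sigma i \<circ> sigma i = id" by (auto simp: fun_eq_iff)
lemma bij_sigma: "bij (sigma i)" by (metis o_bij sigma_comp_sigma)

lemma wp_Nil[simp]: "word_perm [] = id" by (simp add: word_perm_def)
lemma wp_Cons: "word_perm (i # a) = sigma i \<circ> word_perm a" by (simp add: word_perm_def)
lemma foldr_wp: "foldr (\<lambda>i f. sigma i \<circ> f) a g = word_perm a \<circ> g"
proof (induction a arbitrary: g)
  case Nil then show ?case by simp
next
  case (Cons x a)
  have "foldr (\<lambda>i f. sigma i \<circ> f) (x # a) g = sigma x \<circ> foldr (\<lambda>i f. sigma i \<circ> f) a g" by simp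
  also have "\<dots> = sigma x \<circ> (word_perm a \<circ> g)" by (simp only: Cons.IH)
  also have "\<dots> = word_perm (x # a) \<circ> g" by (simp add: wp_Cons o_assoc)
  finally show ?case .
qed
lemma wp_append: "word_perm (a @ b) = word_perm a \<circ> word_perm b"
proof -
  have "word_perm (a @ b) = foldr (\<lambda>i f. sigma i \<circ> f) a (word_perm b)" by (simp add: word_perm_def)
  then show ?thesis by (simp only: foldr_wp)
qed
lemma wp_snoc: "word_perm (a @ [i]) = word_perm a \<circ> sigma i"
  by (simp add: wp_append wp_Cons)

definition fp :: "(nat \<Rightarrow> nat) \<Rightarrow> bool" where
  "fp w \<longleftrightarrow> bij w \<and> finite {x. w x \<noteq> x}"

lemma fp_comp_sigma: "fp w \<Longrightarrow> fp (w \<circ> sigma i)"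
proof -
  assume "fp w"
  then have b: "bij w" and f: "finite {x. w x \<noteq> x}" by (auto simp: fp_def)
  have "bij (w \<circ> sigma i)" using b bij_sigma bij_comp by blast
  moreover have "{x. (w \<circ> sigma i) x \<noteq> x} \<subseteq> {x. w x \<noteq> x} \<union> {i, Suc i}"
    using sigma_other by fastforce
  then have "finite {x. (w \<circ> sigma i) x \<noteq> x}" using f by (meson finite.insertI finite.emptyI finite_UnI finite_subset)
  ultimately show ?thesis by (simp add: fp_def)
qed

lemma fp_wp: "fp (word_perm a)"
proof (induction a rule: rev_induct)
  case Nil then show ?case by (auto simp: fp_def bij_def inj_on_def)
next
  case (snoc i a) then show ?case unfolding wp_snoc by (rule fp_comp_sigma)
qed

lemma wp_zero: "is_word a \<Longrightarrow> word_perm a 0 = 0"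
  by (induction a) (auto simp: wp_Cons is_word_def sigma_def)

lemma fin_perm_wp: "is_word a \<Longrightarrow> fin_perm (word_perm a)"
  using fp_wp[of a] wp_zero[of a] by (simp add: fin_perm_def fp_def)

lemma fin_perm_fp: "fin_perm w \<Longrightarrow> fp w" by (simp add: fin_perm_def fp_def)

lemma fin_perm_comp: "fin_perm w \<Longrightarrow> 1 \<le> i \<Longrightarrow> fin_perm (w \<circ> sigma i)"
  using fp_comp_sigma[of w i] by (auto simp: fin_perm_def fp_def sigma_def)

definition invs :: "(nat \<Rightarrow> nat) \<Rightarrow> (nat \<times> nat) set" where
  "invs w = {(x,y). x < y \<and> w y < w x}"
definition ninv :: "(nat \<Rightarrow> nat) \<Rightarrow> nat" where
  "ninv w = card (invs w)"

lemma finite_invs: assumes "fp w" shows "finite (invs w)"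
proof -
  have i: "inj w" and f: "finite {x. w x \<noteq> x}" using assms by (auto simp: fp_def bij_def)
  obtain N where N: "\<forall>x\<in>{x. w x \<noteq> x}. x \<le> N" using f finite_nat_set_iff_bounded_le by blast
  have "invs w \<subseteq> {..N} \<times> {..N}"
  proof
    fix p assume "p \<in> invs w"
    then obtain x y where p: "p = (x,y)" "x < y" "w y < w x" by (auto simp: invs_def)
    have "w y \<noteq> y \<or> w x \<noteq> x" using p by auto
    have "x \<le> N"
    proof (cases "w x = x")
      case True
      then have "w y < x" using p by simp
      then have "w y \<noteq> y" using p by simp
      then have "y \<le> N" using N by auto
      then show ?thesis using p by simp
    next
      case False then show ?thesis using N by auto
    qed
    have "y \<le> N"
    proof (rule ccontr)
      assume "\<not> y \<le> N"
      then have wy: "w y = y" using N by auto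
      then have "w x > x" using p by simp
      have "w (w x) \<noteq> w x"
      proof
        assume "w (w x) = w x"
        then have "w x = x" using i by (simp add: inj_eq)
        then show False using \<open>w x > x\<close> by simp
      qed
      then have "w x \<le> N" using N by auto
      then show False using p wy \<open>\<not> y \<le> N\<close> by simp
    qed
    then show "p \<in> {..N} \<times> {..N}" using p \<open>x \<le> N\<close> by simp
  qed
  then show ?thesis by (rule finite_subset) simp
qed

lemma sigma_mono: "x < y \<Longrightarrow> (x,y) \<noteq> (i, Suc i) \<Longrightarrow> sigma i x < sigma i y"
  by (auto simp: sigma_def)

lemma invs_swap:
  "invs (w \<circ> sigma i) - {(i, Suc i)} = (\<lambda>(x,y). (sigma i x, sigma i y)) ` (invs w - {(i, Suc i)})"
proof (intro set_eqI iffI)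
  fix p assume p: "p \<in> invs (w \<circ> sigma i) - {(i, Suc i)}"
  obtain x y where pxy: "p = (x,y)" by (cases p)
  have xy: "x < y" "w (sigma i y) < w (sigma i x)" "(x,y) \<noteq> (i, Suc i)"
    using p unfolding pxy invs_def by auto
  have m: "sigma i x < sigma i y" using sigma_mono xy by blast
  have ne: "(sigma i x, sigma i y) \<noteq> (i, Suc i)"
  proof
    assume "(sigma i x, sigma i y) = (i, Suc i)"
    then have "x = Suc i" "y = i" by (metis prod.inject sigma_sigma sigma_i sigma_Suc_i)+
    then show False using xy by simp
  qed
  have mem: "(sigma i x, sigma i y) \<in> invs w - {(i, Suc i)}"
    using m ne xy unfolding invs_def by simp
  have "p = (\<lambda>(x,y). (sigma i x, sigma i y)) (sigma i x, sigma i y)" using pxy by simp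
  then show "p \<in> (\<lambda>(x,y). (sigma i x, sigma i y)) ` (invs w - {(i, Suc i)})"
    using mem by (rule image_eqI)
next
  fix p assume "p \<in> (\<lambda>(x,y). (sigma i x, sigma i y)) ` (invs w - {(i, Suc i)})"
  then obtain q where q: "q \<in> invs w - {(i, Suc i)}" "p = (\<lambda>(x,y). (sigma i x, sigma i y)) q" by blast
  obtain x y where qxy: "q = (x,y)" by (cases q)
  have xy: "x < y" "w y < w x" "(x,y) \<noteq> (i, Suc i)" using q unfolding qxy invs_def by auto
  have p': "p = (sigma i x, sigma i y)" using q qxy by simp
  have m: "sigma i x < sigma i y" using sigma_mono xy by blast
  have ne: "(sigma i x, sigma i y) \<noteq> (i, Suc i)"
  proof
    assume "(sigma i x, sigma i y) = (i, Suc i)"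
    then have "x = Suc i" "y = i" by (metis prod.inject sigma_sigma sigma_i sigma_Suc_i)+
    then show False using xy by simp
  qed
  show "p \<in> invs (w \<circ> sigma i) - {(i, Suc i)}"
    using m ne xy unfolding p' invs_def by simp
qed

lemma card_invs_swap:
  assumes "fp w"
  shows "card (invs (w \<circ> sigma i) - {(i, Suc i)}) = card (invs w - {(i, Suc i)})"
proof -
  have "inj_on (\<lambda>(x,y). (sigma i x, sigma i y)) (invs w - {(i, Suc i)})"
  proof (rule inj_onI)
    fix p q assume "(\<lambda>(x,y). (sigma i x, sigma i y)) p = (\<lambda>(x,y). (sigma i x, sigma i y)) q"
    then have "sigma i (fst p) = sigma i (fst q)" "sigma i (snd p) = sigma i (snd q)"
      by (auto simp: case_prod_beta)
    then have "fst p = fst q" "snd p = snd q" by (metis sigma_sigma)+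
    then show "p = q" by (simp add: prod_eq_iff)
  qed
  then show ?thesis by (simp add: invs_swap card_image)
qed

lemma ninv_asc:
  assumes "fp w" "w i < w (Suc i)"
  shows "ninv (w \<circ> sigma i) = Suc (ninv w)"
proof -
  have f2: "finite (invs (w \<circ> sigma i))" using finite_invs fp_comp_sigma assms by blast
  have m: "(i, Suc i) \<in> invs (w \<circ> sigma i)" using assms unfolding invs_def by simp
  have nm: "(i, Suc i) \<notin> invs w" using assms unfolding invs_def by simp
  have 1: "card (invs (w \<circ> sigma i)) = Suc (card (invs (w \<circ> sigma i) - {(i, Suc i)}))"
    using card.remove[OF f2 m] .
  have 2: "invs w - {(i, Suc i)} = invs w" using nm by blast
  show ?thesis unfolding ninv_def 1 card_invs_swap[OF assms(1), of i] 2 ..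
qed

lemma ninv_desc:
  assumes "fp w" "w (Suc i) < w i"
  shows "Suc (ninv (w \<circ> sigma i)) = ninv w"
proof -
  have f1: "finite (invs w)" using finite_invs assms by blast
  have m: "(i, Suc i) \<in> invs w" using assms unfolding invs_def by simp
  have nm: "(i, Suc i) \<notin> invs (w \<circ> sigma i)" using assms unfolding invs_def by simp
  have 1: "card (invs w) = Suc (card (invs w - {(i, Suc i)}))"
    using card.remove[OF f1 m] .
  have 2: "invs (w \<circ> sigma i) - {(i, Suc i)} = invs (w \<circ> sigma i)" using nm by blast
  show ?thesis unfolding ninv_def 1 card_invs_swap[OF assms(1), of i, unfolded 2] ..
qed

lemma ninv_id: "ninv id = 0"
proof -
  have "invs id = {}" by (auto simp: invs_def)
  then show ?thesis by (simp add: ninv_def)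
qed

lemma ninv_app_le: "ninv (word_perm (a @ c)) \<le> ninv (word_perm a) + length c"
proof (induction c rule: rev_induct)
  case Nil then show ?case by simp
next
  case (snoc i c)
  let ?W = "word_perm (a @ c)"
  have fpW: "fp ?W" by (rule fp_wp)
  then have "inj ?W" by (simp add: fp_def bij_def)
  then have "?W i \<noteq> ?W (Suc i)" by (simp add: inj_eq)
  then have "ninv (?W \<circ> sigma i) \<le> Suc (ninv ?W)"
    using ninv_asc[OF fpW, of i] ninv_desc[OF fpW, of i] by (cases "?W i < ?W (Suc i)") auto
  then have "ninv (word_perm ((a @ c) @ [i])) \<le> Suc (ninv ?W)" unfolding wp_snoc .
  then show ?case using snoc.IH by simp
qed

lemma ninv_le_length: "ninv (word_perm a) \<le> length a"
  using ninv_app_le[of "[]" a] by (simp add: ninv_id)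


lemma chain_lt:
  assumes "\<And>i. a \<le> i \<Longrightarrow> i < b \<Longrightarrow> (f::nat\<Rightarrow>nat) i < f (Suc i)"
  shows "a \<le> z \<Longrightarrow> z < x \<Longrightarrow> x \<le> b \<Longrightarrow> f z < f x"
proof (induction x)
  case 0 then show ?case by simp
next
  case (Suc x)
  show ?case
  proof (cases "z = x")
    case True then show ?thesis using assms Suc.prems by simp
  next
    case False
    then have "f z < f x" using Suc by simp
    also have "f x < f (Suc x)" using assms Suc.prems False by simp
    finally show ?thesis .
  qed
qed

lemma no_desc_fix:
  assumes fpw: "fp w" and mono: "\<And>i. L \<le> i \<Longrightarrow> w i < w (Suc i)"
    and pre: "\<And>z. Suc L \<le> w z \<Longrightarrow> L \<le> z"
  shows "Suc L \<le> x \<Longrightarrow> w x = x"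
proof (rule ccontr)
  assume x: "Suc L \<le> x" "w x \<noteq> x"
  have b: "bij w" and f: "finite {x. w x \<noteq> x}" using fpw by (auto simp: fp_def)
  let ?D = "{x. Suc L \<le> x \<and> w x \<noteq> x}"
  have fD: "finite ?D" using f by (rule finite_subset[rotated]) auto
  have neD: "x \<in> ?D" using x by simp
  define x0 where "x0 = Max ?D"
  have x0D: "x0 \<in> ?D" using fD neD unfolding x0_def by (intro Max_in) auto
  have x0max: "\<And>y. y \<in> ?D \<Longrightarrow> y \<le> x0" using fD unfolding x0_def by simp
  have "w (Suc x0) = Suc x0" using x0max[of "Suc x0"] x0D by fastforce
  moreover have "w x0 < w (Suc x0)" using mono x0D by simp
  ultimately have lt: "w x0 < x0" using x0D by simp
  obtain z where z: "w z = x0" using b unfolding bij_def surj_def by metis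
  have "L \<le> z" using pre z x0D by simp
  show False
  proof (cases z x0 rule: linorder_cases)
    case less
    then have "w z < w x0" using chain_lt[of L x0 w z x0] mono \<open>L \<le> z\<close> by simp
    then show False using z lt by simp
  next
    case equal then show False using z x0D by simp
  next
    case greater
    then have "z \<notin> ?D" using x0max by fastforce
    then have "w z = z" using greater x0D by simp
    then show False using z greater by simp
  qed
qed

lemma exists_word:
  "fin_perm w \<Longrightarrow> (\<forall>x>n. w x = x) \<Longrightarrow>
    \<exists>a. is_word a \<and> word_perm a = w \<and> length a = ninv w \<and> (\<forall>i\<in>set a. i < n)"
proof (induction "ninv w" arbitrary: w rule: less_induct)
  case less
  have fpw: "fp w" using less.prems fin_perm_fp by blast
  have inj: "inj w" and w0: "w 0 = 0" using less.prems by (auto simp: fin_perm_def bij_def)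
  show ?case
  proof (cases "\<exists>i. w (Suc i) < w i")
    case False
    have "\<And>i. w i < w (Suc i)"
    proof -
      fix i
      have "w i \<noteq> w (Suc i)" using inj by (simp add: inj_eq)
      moreover have "\<not> w (Suc i) < w i" using False by blast
      ultimately show "w i < w (Suc i)" by linarith
    qed
    then have "\<And>x. Suc 0 \<le> x \<Longrightarrow> w x = x" using no_desc_fix[OF fpw, of 0] by blast
    then have "w = id" using w0 by (auto simp: fun_eq_iff) (metis Suc_leI neq0_conv)
    then show ?thesis by (intro exI[of _ "[]"]) (simp add: is_word_def ninv_id)
  next
    case True
    then obtain i where i: "w (Suc i) < w i" by blast
    have i1: "1 \<le> i" using i w0 by (cases i) auto
    have in_: "i < n"
    proof (rule ccontr)
      assume "\<not> i < n"
      then have "w (Suc i) = Suc i" using less.prems by simp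
      then have "w i > Suc i" using i by simp
      then have "w (w i) = w i" using less.prems \<open>\<not> i < n\<close> by simp
      then have "w i = i" using inj by (simp add: inj_eq)
      then show False using \<open>w i > Suc i\<close> by simp
    qed
    let ?w = "w \<circ> sigma i"
    have d: "Suc (ninv ?w) = ninv w" using ninv_desc[OF fpw i] .
    have fw: "fin_perm ?w" using fin_perm_comp less.prems i1 by blast
    have "\<forall>x>n. ?w x = x" using less.prems in_ by (simp add: sigma_def)
    then obtain a where a: "is_word a" "word_perm a = ?w" "length a = ninv ?w" "\<forall>j\<in>set a. j < n"
      using less.hyps[of ?w] d fw by auto
    have "word_perm (a @ [i]) = w" using a by (simp add: wp_snoc comp_assoc)
    then show ?thesis using a d i1 in_
      by (intro exI[of _ "a @ [i]"]) (auto simp: is_word_def)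
  qed
qed

lemma exists_word':
  assumes "fin_perm w" shows "\<exists>a. is_word a \<and> word_perm a = w \<and> length a = ninv w"
proof -
  have "finite {x. w x \<noteq> x}" using assms by (simp add: fin_perm_def)
  then obtain N where "\<forall>x\<in>{x. w x \<noteq> x}. x \<le> N" using finite_nat_set_iff_bounded_le by blast
  then have "\<forall>x>N. w x = x" by force
  then show ?thesis using exists_word[OF assms] by blast
qed

lemma len_ninv_reduced:
  "is_word a \<Longrightarrow> word_perm a = w \<Longrightarrow> length a = ninv w \<Longrightarrow> reduced_word w a"
  unfolding reduced_word_def using ninv_le_length by metis

lemma reduced_fin_perm: "reduced_word w a \<Longrightarrow> fin_perm w"
  using fin_perm_wp by (auto simp: reduced_word_def)

lemma reduced_len: "reduced_word w a \<Longrightarrow> length a = ninv w"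
proof -
  assume r: "reduced_word w a"
  obtain b where "is_word b" "word_perm b = w" "length b = ninv w"
    using exists_word' reduced_fin_perm[OF r] by blast
  then show ?thesis using r ninv_le_length[of a] unfolding reduced_word_def by force
qed

definition Ak :: "nat \<Rightarrow> (nat \<Rightarrow> nat) \<Rightarrow> bool" where
  "Ak k w \<longleftrightarrow> (\<forall>x. 1 \<le> x \<longrightarrow> x \<le> k \<longrightarrow> w x \<le> Suc k)"
definition Bk :: "nat \<Rightarrow> (nat \<Rightarrow> nat) \<Rightarrow> bool" where
  "Bk k w \<longleftrightarrow> (\<forall>y. Suc (Suc k) \<le> y \<longrightarrow> Suc k \<le> w y)"

lemma A_split:
  "fin_perm w \<Longrightarrow> Ak k w \<Longrightarrow>
    \<exists>u v. is_word (u @ v) \<and> word_perm (u @ v) = w \<and> length (u @ v) = ninv w \<and>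
      (\<forall>x\<in>set u. x \<le> k) \<and> (\<forall>x\<in>set v. Suc k \<le> x)"
proof (induction "ninv w" arbitrary: w rule: less_induct)
  case less
  have fpw: "fp w" using less.prems fin_perm_fp by blast
  have inj: "inj w" and w0: "w 0 = 0" using less.prems by (auto simp: fin_perm_def bij_def)
  show ?case
  proof (cases "\<exists>i. Suc k \<le> i \<and> w (Suc i) < w i")
    case False
    have mono: "\<And>i. Suc k \<le> i \<Longrightarrow> w i < w (Suc i)"
    proof -
      fix i assume "Suc k \<le> i"
      have "w i \<noteq> w (Suc i)" using inj by (simp add: inj_eq)
      moreover have "\<not> w (Suc i) < w i" using False \<open>Suc k \<le> i\<close> by blast
      ultimately show "w i < w (Suc i)" by linarith
    qed
    have pre: "\<And>z. Suc (Suc k) \<le> w z \<Longrightarrow> Suc k \<le> z"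
    proof -
      fix z assume "Suc (Suc k) \<le> w z"
      then have "w z \<noteq> 0" by simp
      then have "z \<noteq> 0" using w0 by (metis)
      show "Suc k \<le> z"
      proof (rule ccontr)
        assume "\<not> Suc k \<le> z"
        then have "w z \<le> Suc k" using less.prems(2) \<open>z \<noteq> 0\<close> unfolding Ak_def by simp
        then show False using \<open>Suc (Suc k) \<le> w z\<close> by simp
      qed
    qed
    have "\<forall>x>Suc k. w x = x" using no_desc_fix[OF fpw mono pre] by (simp add: Suc_le_eq)
    then obtain a where a: "is_word a" "word_perm a = w" "length a = ninv w" "\<forall>j\<in>set a. j < Suc k"
      using exists_word[OF less.prems(1)] by blast
    then show ?thesis by (intro exI[of _ a] exI[of _ "[]"]) auto
  next
    case True
    then obtain i where i: "Suc k \<le> i" "w (Suc i) < w i" by blast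
    let ?w = "w \<circ> sigma i"
    have d: "Suc (ninv ?w) = ninv w" using ninv_desc[OF fpw i(2)] .
    have fw: "fin_perm ?w" using fin_perm_comp less.prems i by simp
    have "Ak k ?w" using less.prems(2) i(1) unfolding Ak_def by (simp add: sigma_def)
    then obtain u v where uv: "is_word (u @ v)" "word_perm (u @ v) = ?w" "length (u @ v) = ninv ?w"
      "\<forall>x\<in>set u. x \<le> k" "\<forall>x\<in>set v. Suc k \<le> x"
      using less.hyps[of ?w] d fw by auto
    have "word_perm ((u @ v) @ [i]) = w" unfolding wp_snoc using uv by (simp add: comp_assoc)
    then have "word_perm (u @ v @ [i]) = w" by simp
    then show ?thesis using uv d i
      by (intro exI[of _ u] exI[of _ "v @ [i]"]) (auto simp: is_word_def)
  qed
qed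


lemma reduced_asc:
  assumes r: "reduced_word w a" and j: "j < length a"
  shows "word_perm (take j a) (a ! j) < word_perm (take j a) (Suc (a ! j))"
proof (rule ccontr)
  assume na: "\<not> ?thesis"
  let ?W = "word_perm (take j a)"
  let ?i = "a ! j"
  have fpW: "fp ?W" by (rule fp_wp)
  then have "inj ?W" by (simp add: fp_def bij_def)
  then have "?W ?i \<noteq> ?W (Suc ?i)" by (simp add: inj_eq)
  then have desc: "?W (Suc ?i) < ?W ?i" using na by simp
  have d: "Suc (ninv (?W \<circ> sigma ?i)) = ninv ?W" using ninv_desc[OF fpW desc] .
  have t: "take (Suc j) a = take j a @ [?i]" using j by (simp add: take_Suc_conv_app_nth)
  have "ninv w = ninv (word_perm (take (Suc j) a @ drop (Suc j) a))" using r by (simp add: reduced_word_def)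
  also have "\<dots> \<le> ninv (word_perm (take (Suc j) a)) + length (drop (Suc j) a)" by (rule ninv_app_le)
  also have "word_perm (take (Suc j) a) = ?W \<circ> sigma ?i" unfolding t by (rule wp_snoc)
  finally have "ninv w \<le> ninv (?W \<circ> sigma ?i) + length (drop (Suc j) a)" .
  then have 1: "ninv w \<le> ninv (?W \<circ> sigma ?i) + (length a - Suc j)" by (simp only: length_drop)
  have 2: "ninv ?W \<le> j" using ninv_le_length[of "take j a"] j by simp
  have 3: "length a = ninv w" using reduced_len[OF r] .
  show False using 1 2 3 d j by linarith
qed

lemma reduced_step:
  "j < length a \<Longrightarrow> word_perm (take (Suc j) a) = word_perm (take j a) \<circ> sigma (a ! j)"
  by (simp add: take_Suc_conv_app_nth wp_snoc)

lemma A_order: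
  assumes r: "reduced_word w a" and A: "Ak k w" and pq: "p < q" "q < length a"
    and ap: "a ! p = Suc k" and aq: "a ! q = k"
  shows False
proof -
  define n where "n = length a"
  define W where "W j = word_perm (take j a)" for j
  have Wn: "W n = w" using r by (simp add: W_def n_def reduced_word_def)
  have step: "\<And>j. j < n \<Longrightarrow> W (Suc j) = W j \<circ> sigma (a ! j)"
    unfolding W_def n_def by (rule reduced_step)
  have asc: "\<And>j. j < n \<Longrightarrow> W j (a ! j) < W j (Suc (a ! j))"
    unfolding W_def n_def using reduced_asc[OF r] by blast
  have iw: "is_word a" using r by (simp add: reduced_word_def)
  then have letters: "\<And>j. j < n \<Longrightarrow> 1 \<le> a ! j" by (simp add: is_word_def n_def)
  have k1: "1 \<le> k" using letters[of q] aq pq by (simp add: n_def)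
  have fpW: "\<And>j. fin_perm (W j)" unfolding W_def
    by (rule fin_perm_wp) (use iw in \<open>auto simp: is_word_def dest: in_set_takeD\<close>)
  have notA: "j \<le> n \<Longrightarrow> \<not> Ak k (W j) \<Longrightarrow> \<not> Ak k (W n)" for j
  proof (induction rule: dec_induct)
    case base then show ?case .
  next
    case (step t)
    then obtain x where x: "1 \<le> x" "x \<le> k" "W t x > Suc k" unfolding Ak_def by auto
    let ?i = "a ! t"
    have st: "W (Suc t) = W t \<circ> sigma ?i" using step.hyps \<open>t < n\<close> by (simp add: \<open>\<And>j. j < n \<Longrightarrow> W (Suc j) = W j \<circ> sigma (a ! j)\<close>)
    have i1: "1 \<le> ?i" using letters step.hyps by simp
    have as: "W t ?i < W t (Suc ?i)" using asc step.hyps by simp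
    have "\<exists>x'. 1 \<le> x' \<and> x' \<le> k \<and> W (Suc t) x' > Suc k"
    proof (cases "x = ?i")
      case True
      show ?thesis
      proof (cases "?i = k")
        case True
        then show ?thesis using st as x \<open>x = ?i\<close> k1 by (intro exI[of _ k]) auto
      next
        case False
        then show ?thesis using st x \<open>x = ?i\<close> by (intro exI[of _ "Suc ?i"]) auto
      qed
    next
      case False
      show ?thesis
      proof (cases "x = Suc ?i")
        case True
        then show ?thesis using st x i1 by (intro exI[of _ ?i]) auto
      next
        case False
        then show ?thesis using st x \<open>x \<noteq> ?i\<close> sigma_other by (intro exI[of _ x]) auto
      qed
    qed
    then have "\<not> Ak k (W (Suc t))" unfolding Ak_def by (auto simp: not_le)
    then show ?case using step.IH by blast
  qed
  have Aall: "\<And>j. j \<le> n \<Longrightarrow> Ak k (W j)" using notA A Wn by blast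
  have pn: "p < n" using pq by (simp add: n_def)
  have base0: "W (Suc p) (Suc k) \<ge> Suc (Suc k)"
  proof (rule ccontr)
    assume "\<not> ?thesis"
    then have le: "W p (Suc (Suc k)) \<le> Suc k" using step[OF pn] ap by simp
    have as: "W p (Suc k) < W p (Suc (Suc k))" using asc[OF pn] ap by simp
    have injp: "inj (W p)" and W0: "W p 0 = 0" using fpW[of p] by (auto simp: fin_perm_def bij_def)
    have sub: "W p ` {1..Suc (Suc k)} \<subseteq> {1..Suc k}"
    proof
      fix y assume "y \<in> W p ` {1..Suc (Suc k)}"
      then obtain x where x: "x \<in> {1..Suc (Suc k)}" "y = W p x" by blast
      have "W p x \<noteq> 0"
      proof
        assume "W p x = 0"
        then have "W p x = W p 0" using W0 by simp
        then have "x = 0" using injp by (simp add: inj_eq)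
        then show False using x by simp
      qed
      moreover have "W p x \<le> Suc k"
      proof -
        have "x \<le> Suc (Suc k)" using x by simp
        then consider "x \<le> k" | "x = Suc k" | "x = Suc (Suc k)" by (auto simp: le_Suc_eq)
        then show ?thesis
        proof cases
          case 1 then show ?thesis using Aall[of p] pn x unfolding Ak_def by simp
        next
          case 2 then show ?thesis using as le by simp
        next
          case 3 then show ?thesis using le by simp
        qed
      qed
      ultimately show "y \<in> {1..Suc k}" using x by simp
    qed
    have ij: "inj_on (W p) {1..Suc (Suc k)}" using injp by (rule inj_on_subset) simp
    have "card {1..Suc (Suc k)} \<le> card {1..Suc k}"
      by (rule card_inj_on_le[OF ij sub finite_atLeastAtMost])
    then show False by (simp only: card_atLeastAtMost)
  qed
  have inv0: "Suc p + d \<le> n \<Longrightarrow> W (Suc p + d) (Suc k) \<ge> Suc (Suc k)" for d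
  proof (induction d)
    case 0 show ?case using base0 by simp
  next
    case (Suc d)
    define t where "t = Suc p + d"
    have tn: "t < n" using Suc.prems t_def by simp
    have IH: "W t (Suc k) \<ge> Suc (Suc k)" using Suc.IH Suc.prems t_def by simp
    have eq: "Suc p + Suc d = Suc t" using t_def by simp
    let ?i = "a ! t"
    have st: "W (Suc t) = W t \<circ> sigma ?i" using step[OF tn] .
    have as: "W t ?i < W t (Suc ?i)" using asc[OF tn] .
    have "W (Suc t) (Suc k) \<ge> Suc (Suc k)"
    proof -
      consider "?i = Suc k" | "?i = k" | "?i \<noteq> k \<and> ?i \<noteq> Suc k" by blast
      then show ?thesis
      proof cases
        case 1 then show ?thesis using st as IH by simp
      next
        case 2
        then have "W (Suc t) k \<ge> Suc (Suc k)" using st as IH by simp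
        moreover have "Ak k (W (Suc t))" using Aall tn by simp
        ultimately show ?thesis using k1 unfolding Ak_def by force
      next
        case 3 then show ?thesis using st IH sigma_other[of "Suc k" ?i] by simp
      qed
    qed
    then show ?case unfolding eq .
  qed
  have inv: "Suc p \<le> t \<Longrightarrow> t \<le> n \<Longrightarrow> W t (Suc k) \<ge> Suc (Suc k)" for t
    using inv0[of "t - Suc p"] by simp
  have qn: "q < n" using pq by (simp add: n_def)
  have "W q (Suc k) \<ge> Suc (Suc k)" using inv[of q] pq qn by simp
  then have "W (Suc q) k \<ge> Suc (Suc k)" using step[OF qn] aq by simp
  moreover have "Ak k (W (Suc q))" using Aall qn by simp
  ultimately show False using k1 unfolding Ak_def by force
qed


lemma wp_rev_comp: "word_perm (rev a) \<circ> word_perm a = id"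
proof (induction a)
  case Nil then show ?case by simp
next
  case (Cons i a)
  have "\<And>x. word_perm (rev a) (word_perm a x) = x" using Cons by (metis comp_apply id_apply)
  then show ?case by (simp add: wp_snoc wp_Cons fun_eq_iff)
qed

lemma wp_rev: "word_perm (rev a) = inv (word_perm a)"
  using wp_rev_comp[of a] wp_rev_comp[of "rev a"] by (simp add: inv_unique_comp)

lemma reduced_rev:
  assumes r: "reduced_word w a" shows "reduced_word (inv w) (rev a)"
proof -
  have b: "bij w" using reduced_fin_perm[OF r] by (simp add: fin_perm_def)
  have "is_word (rev a)" "word_perm (rev a) = inv w" using r by (auto simp: reduced_word_def is_word_def wp_rev)
  moreover have "length (rev a) \<le> length c" if "is_word c" "word_perm c = inv w" for c
  proof -
    have "word_perm (rev c) = w" using that b by (simp add: wp_rev inv_inv_eq)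
    moreover have "is_word (rev c)" using that by (simp add: is_word_def)
    ultimately show ?thesis using r by (auto simp: reduced_word_def)
  qed
  ultimately show ?thesis by (simp add: reduced_word_def)
qed

lemma fin_perm_inv: assumes "fin_perm w" shows "fin_perm (inv w)"
proof -
  have b: "bij w" and f: "finite {x. w x \<noteq> x}" and w0: "w 0 = 0" using assms by (auto simp: fin_perm_def)
  have sj: "\<And>x. w (inv w x) = x" using b bij_is_surj surj_f_inv_f by metis
  have ij: "\<And>x. inv w (w x) = x" using b bij_is_inj inv_f_f by metis
  have "bij (inv w)" using b by (simp add: bij_imp_bij_inv)
  moreover have "{x. inv w x \<noteq> x} \<subseteq> w ` {x. w x \<noteq> x}"
  proof
    fix x assume "x \<in> {x. inv w x \<noteq> x}"
    then have 1: "inv w x \<noteq> x" by simp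
    have 2: "w (inv w x) = x" by (rule sj)
    have "inv w x \<in> {x. w x \<noteq> x}" using 1 2 by simp
    then show "x \<in> w ` {x. w x \<noteq> x}" using 2 by (metis imageI)
  qed
  then have "finite {x. inv w x \<noteq> x}" using f finite_surj by blast
  moreover have "inv w 0 = 0" using ij[of 0] w0 by simp
  ultimately show ?thesis by (simp add: fin_perm_def)
qed

lemma B_imp_A_inv: assumes "fin_perm w" "Bk k w" shows "Ak k (inv w)"
  unfolding Ak_def
proof (intro allI impI)
  fix x assume x: "1 \<le> x" "x \<le> k"
  have b: "bij w" using assms by (simp add: fin_perm_def)
  have e: "w (inv w x) = x" using b bij_is_surj surj_f_inv_f by metis
  show "inv w x \<le> Suc k"
  proof (rule ccontr)
    assume "\<not> inv w x \<le> Suc k"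
    then have "Suc (Suc k) \<le> inv w x" by simp
    then have "Suc k \<le> w (inv w x)" using assms(2) unfolding Bk_def by blast
    then show False using e x by simp
  qed
qed

lemma wp_fix: "(\<forall>i\<in>set b. i \<noteq> x \<and> Suc i \<noteq> x) \<Longrightarrow> word_perm b x = x"
  by (induction b) (simp_all add: wp_Cons sigma_other)

lemma sigma_le: "i \<noteq> n \<Longrightarrow> y \<le> n \<Longrightarrow> sigma i y \<le> n"
  by (simp add: sigma_def)

lemma L_pres: "n \<notin> set b \<Longrightarrow> x \<le> n \<Longrightarrow> word_perm b x \<le> n"
proof (induction b arbitrary: x)
  case Nil then show ?case by simp
next
  case (Cons i b)
  then have "word_perm b x \<le> n" "i \<noteq> n" by auto
  then show ?case by (simp add: wp_Cons sigma_le)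
qed

lemma sigma_ge: "i \<noteq> n \<Longrightarrow> Suc n \<le> y \<Longrightarrow> Suc n \<le> sigma i y"
  by (simp add: sigma_def)

lemma L_pres2: "n \<notin> set b \<Longrightarrow> Suc n \<le> x \<Longrightarrow> Suc n \<le> word_perm b x"
proof (induction b arbitrary: x)
  case Nil then show ?case by simp
next
  case (Cons i b)
  then have "Suc n \<le> word_perm b x" "i \<noteq> n" by auto
  then show ?case by (simp add: wp_Cons sigma_ge)
qed


lemma has_pattern_snoc: "has_pattern a u v \<Longrightarrow> has_pattern (a @ [i]) u v"
  unfolding has_pattern_def
proof -
  assume "\<exists>p q r. p < q \<and> q < r \<and> r < length a \<and> a ! p = u \<and> a ! q = v \<and> a ! r = u"
  then obtain p q r where pqr: "p < q" "q < r" "r < length a" "a ! p = u" "a ! q = v" "a ! r = u"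
    by blast
  have "p < length a" "q < length a" using pqr by linarith+
  then have "(a @ [i]) ! p = u" "(a @ [i]) ! q = v" "(a @ [i]) ! r = u"
    using pqr by (simp_all add: nth_append)
  moreover have "r < length (a @ [i])" using pqr by simp
  ultimately show "\<exists>p q r. p < q \<and> q < r \<and> r < length (a @ [i]) \<and> (a @ [i]) ! p = u \<and> (a @ [i]) ! q = v \<and> (a @ [i]) ! r = u"
    using pqr by blast
qed

lemma claimC:
  "fin_perm w \<Longrightarrow> \<not> Ak k w \<Longrightarrow> \<not> Bk k w \<Longrightarrow>
   \<exists>a. reduced_word w a \<and> (has_pattern a k (Suc k) \<or> has_pattern a (Suc k) k)"
proof (induction "ninv w" arbitrary: w rule: less_induct)
  case less
  have fpw: "fp w" using less.prems fin_perm_fp by blast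
  have inj: "inj w" and w0: "w 0 = 0" using less.prems by (auto simp: fin_perm_def bij_def)
  obtain x where x: "1 \<le> x" "x \<le> k" "w x > Suc k" using less.prems(2) unfolding Ak_def by (auto simp: not_le)
  obtain y where y: "Suc (Suc k) \<le> y" "w y \<le> k" using less.prems(3) unfolding Bk_def by (auto simp: not_le)
  have k1: "1 \<le> k" using x by simp
  show ?case
  proof (cases "\<exists>i. 1 \<le> i \<and> i \<noteq> k \<and> i \<noteq> Suc k \<and> w (Suc i) < w i")
    case True
    then obtain i where i: "1 \<le> i" "i \<noteq> k" "i \<noteq> Suc k" "w (Suc i) < w i" by blast
    let ?w = "w \<circ> sigma i"
    have d: "Suc (ninv ?w) = ninv w" using ninv_desc[OF fpw i(4)] .
    have fw: "fin_perm ?w" using fin_perm_comp less.prems i by simp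
    have nA: "\<not> Ak k ?w"
    proof -
      have r1: "1 \<le> sigma i x \<and> sigma i x \<le> k"
      proof (cases "x = i")
        case True then show ?thesis using x i by simp
      next
        case False
        show ?thesis
        proof (cases "x = Suc i")
          case True then show ?thesis using x i by simp
        next
          case False2: False
          then show ?thesis using x False sigma_other[of x i] by simp
        qed
      qed
      have "?w (sigma i x) > Suc k" using x by simp
      then show ?thesis using r1 unfolding Ak_def by (meson not_le)
    qed
    have nB: "\<not> Bk k ?w"
    proof -
      have r1: "Suc (Suc k) \<le> sigma i y"
      proof (cases "y = i")
        case True then show ?thesis using y i by simp
      next
        case False
        show ?thesis
        proof (cases "y = Suc i")
          case True then show ?thesis using y i by simp
        next
          case False2: False
          then show ?thesis using y False sigma_other[of y i] by simp
        qed
      qed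
      have "?w (sigma i y) \<le> k" using y by simp
      then show ?thesis using r1 unfolding Bk_def by (meson not_le not_less_eq_eq)
    qed
    have lt: "ninv ?w < ninv w" using d by simp
    obtain a where a: "reduced_word ?w a" "has_pattern a k (Suc k) \<or> has_pattern a (Suc k) k"
      using less.hyps[OF lt fw nA nB] by blast
    have la: "length a = ninv ?w" using reduced_len[OF a(1)] .
    have wa: "word_perm a = ?w" using a(1) unfolding reduced_word_def by blast
    have iwa: "is_word a" using a(1) unfolding reduced_word_def by blast
    have wp1: "word_perm (a @ [i]) = w" unfolding wp_snoc wa by (simp add: comp_assoc)
    have iw1: "is_word (a @ [i])" using iwa i unfolding is_word_def by simp
    have l1: "length (a @ [i]) = ninv w" using la d by simp
    have r: "reduced_word w (a @ [i])" by (rule len_ninv_reduced[OF iw1 wp1 l1])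
    have "has_pattern (a @ [i]) k (Suc k) \<or> has_pattern (a @ [i]) (Suc k) k"
      using a(2) has_pattern_snoc by blast
    then show ?thesis using r by blast
  next
    case False
    have mono: "\<And>i. 1 \<le> i \<Longrightarrow> i \<noteq> k \<Longrightarrow> i \<noteq> Suc k \<Longrightarrow> w i < w (Suc i)"
    proof -
      fix i assume h: "1 \<le> i" "i \<noteq> k" "i \<noteq> Suc k"
      have "w i \<noteq> w (Suc i)" using inj by (simp add: inj_eq)
      moreover have "\<not> w (Suc i) < w i" using False h by blast
      ultimately show "w i < w (Suc i)" by linarith
    qed
    have "w x \<le> w k"
    proof (cases "x = k")
      case False
      then show ?thesis using chain_lt[of 1 k w x k] mono x by fastforce
    qed simp
    then have M: "w k > Suc k" using x by simp
    have "w (Suc (Suc k)) \<le> w y"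
    proof (cases "y = Suc (Suc k)")
      case False
      then show ?thesis using chain_lt[of "Suc (Suc k)" y w "Suc (Suc k)" y] mono y by fastforce
    qed simp
    then have m: "w (Suc (Suc k)) \<le> k" using y by simp
    have cM: "w (Suc k) \<noteq> w k" and cm: "w (Suc k) \<noteq> w (Suc (Suc k))" using inj by (auto simp: inj_eq)
    have sk: "sigma (Suc k) k = k" "sigma k (Suc (Suc k)) = Suc (Suc k)" by (auto simp: sigma_def)
    consider "w (Suc (Suc k)) < w (Suc k) \<and> w (Suc k) < w k" | "w k < w (Suc k)" | "w (Suc k) < w (Suc (Suc k))"
      using cM cm m M by linarith
    then show ?thesis
    proof cases
      case 1
      let ?w1 = "w \<circ> sigma k" let ?w2 = "?w1 \<circ> sigma (Suc k)" let ?w3 = "?w2 \<circ> sigma k"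
      have d1: "Suc (ninv ?w1) = ninv w" using ninv_desc[OF fpw, of k] 1 by simp
      have fp1: "fp ?w1" using fp_comp_sigma fpw by blast
      have d2: "Suc (ninv ?w2) = ninv ?w1" using ninv_desc[OF fp1, of "Suc k"] 1 sk by simp
      have fp2: "fp ?w2" using fp_comp_sigma fp1 by blast
      have d3: "Suc (ninv ?w3) = ninv ?w2" using ninv_desc[OF fp2, of k] 1 sk by simp
      have f3: "fin_perm ?w3" using fin_perm_comp less.prems k1 by simp
      obtain b where b: "is_word b" "word_perm b = ?w3" "length b = ninv ?w3" using exists_word'[OF f3] by blast
      let ?a = "b @ [k, Suc k, k]"
      have "word_perm ?a = w" using b by (simp add: wp_append wp_Cons fun_eq_iff)
      moreover have "is_word ?a" using b k1 by (simp add: is_word_def)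
      ultimately have r: "reduced_word w ?a" using b d1 d2 d3 by (intro len_ninv_reduced) auto
      have "has_pattern ?a k (Suc k)" unfolding has_pattern_def
        by (rule exI[of _ "length b"], rule exI[of _ "Suc (length b)"], rule exI[of _ "Suc (Suc (length b))"])
           (simp add: nth_append)
      then show ?thesis using r by blast
    next
      case 2
      let ?w1 = "w \<circ> sigma (Suc k)" let ?w2 = "?w1 \<circ> sigma k"
      have d1: "Suc (ninv ?w1) = ninv w" using ninv_desc[OF fpw, of "Suc k"] 2 m M by simp
      have fp1: "fp ?w1" using fp_comp_sigma fpw by blast
      have d2: "Suc (ninv ?w2) = ninv ?w1" using ninv_desc[OF fp1, of k] 2 sk m M by simp
      have f2: "fin_perm ?w2" using fin_perm_comp less.prems k1 by simp
      obtain b where b: "is_word b" "word_perm b = ?w2" "length b = ninv ?w2" using exists_word'[OF f2] by blast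
      have "Suc k \<in> set b"
      proof (rule ccontr)
        assume "Suc k \<notin> set b"
        then have "word_perm b (Suc k) \<le> Suc k" using L_pres by blast
        then show False using b M sk by simp
      qed
      then obtain p where p: "p < length b" "b ! p = Suc k" by (meson in_set_conv_nth)
      let ?a = "b @ [k, Suc k]"
      have "word_perm ?a = w" using b by (simp add: wp_append wp_Cons fun_eq_iff)
      moreover have "is_word ?a" using b k1 by (simp add: is_word_def)
      ultimately have r: "reduced_word w ?a" using b d1 d2 by (intro len_ninv_reduced) auto
      have "has_pattern ?a (Suc k) k" unfolding has_pattern_def
        by (rule exI[of _ p], rule exI[of _ "length b"], rule exI[of _ "Suc (length b)"])
           (simp add: nth_append p)
      then show ?thesis using r by blast
    next
      case 3
      let ?w1 = "w \<circ> sigma k" let ?w2 = "?w1 \<circ> sigma (Suc k)"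
      have d1: "Suc (ninv ?w1) = ninv w" using ninv_desc[OF fpw, of k] 3 m M by simp
      have fp1: "fp ?w1" using fp_comp_sigma fpw by blast
      have d2: "Suc (ninv ?w2) = ninv ?w1" using ninv_desc[OF fp1, of "Suc k"] 3 sk m M by simp
      have f2: "fin_perm ?w2" using fin_perm_comp less.prems k1 by simp
      obtain b where b: "is_word b" "word_perm b = ?w2" "length b = ninv ?w2" using exists_word'[OF f2] by blast
      have "k \<in> set b"
      proof (rule ccontr)
        assume "k \<notin> set b"
        then have "Suc k \<le> word_perm b (Suc k)" using L_pres2 by blast
        then show False using b m sk by simp
      qed
      then obtain p where p: "p < length b" "b ! p = k" by (meson in_set_conv_nth)
      let ?a = "b @ [Suc k, k]"
      have "word_perm ?a = w" using b by (simp add: wp_append wp_Cons fun_eq_iff)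
      moreover have "is_word ?a" using b k1 by (simp add: is_word_def)
      ultimately have r: "reduced_word w ?a" using b d1 d2 by (intro len_ninv_reduced) auto
      have "has_pattern ?a k (Suc k)" unfolding has_pattern_def
        by (rule exI[of _ p], rule exI[of _ "length b"], rule exI[of _ "Suc (length b)"])
           (simp add: nth_append p)
      then show ?thesis using r by blast
    qed
  qed
qed

lemma pattern_order:
  assumes "has_pattern a k (Suc k) \<or> has_pattern a (Suc k) k"
  shows "\<exists>p q. p < q \<and> q < length a \<and> a ! p = Suc k \<and> a ! q = k"
  using assms
proof
  assume "has_pattern a k (Suc k)"
  then obtain p q r where h: "p < q" "q < r" "r < length a" "a ! p = k" "a ! q = Suc k" "a ! r = k"
    unfolding has_pattern_def by blast
  show ?thesis by (rule exI[of _ q], rule exI[of _ r]) (use h in simp)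
next
  assume "has_pattern a (Suc k) k"
  then obtain p q r where h: "p < q" "q < r" "r < length a" "a ! p = Suc k" "a ! q = k" "a ! r = Suc k"
    unfolding has_pattern_def by blast
  show ?thesis by (rule exI[of _ p], rule exI[of _ q]) (use h in simp)
qed

lemma pattern_order2:
  assumes "has_pattern a k (Suc k) \<or> has_pattern a (Suc k) k"
  shows "\<exists>p q. p < q \<and> q < length a \<and> a ! p = k \<and> a ! q = Suc k"
  using assms
proof
  assume "has_pattern a k (Suc k)"
  then obtain p q r where h: "p < q" "q < r" "r < length a" "a ! p = k" "a ! q = Suc k" "a ! r = k"
    unfolding has_pattern_def by blast
  show ?thesis by (rule exI[of _ p], rule exI[of _ q]) (use h in simp)
next
  assume "has_pattern a (Suc k) k"
  then obtain p q r where h: "p < q" "q < r" "r < length a" "a ! p = Suc k" "a ! q = k" "a ! r = Suc k"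
    unfolding has_pattern_def by blast
  show ?thesis by (rule exI[of _ q], rule exI[of _ r]) (use h in simp)
qed

theorem proposition3p10:
  fixes w :: "nat \<Rightarrow> nat" and k :: nat
  assumes "fin_perm w"
    and "{k, k + 1} \<subseteq> supp w"
  defines "P1 \<equiv> (\<exists>a. reduced_word w a \<and>
                    (has_pattern a k (k + 1) \<or> has_pattern a (k + 1) k))"
    and "P2 \<equiv> (\<exists>u v. reduced_word w (u @ v) \<and>
                    (((\<forall>x\<in>set u. x \<le> k) \<and> (\<forall>x\<in>set v. k + 1 \<le> x)) \<or>
                     ((\<forall>x\<in>set u. k + 1 \<le> x) \<and> (\<forall>x\<in>set v. x \<le> k))))"
  shows "(P1 \<and> \<not> P2) \<or> (\<not> P1 \<and> P2)"
proof -
  have fw: "fin_perm w" by fact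
  have b: "bij w" using fw by (simp add: fin_perm_def)
  have P2AB: "Ak k w \<or> Bk k w" if P2
  proof -
    obtain u v where r: "reduced_word w (u @ v)" and
      uv: "((\<forall>x\<in>set u. x \<le> k) \<and> (\<forall>x\<in>set v. k + 1 \<le> x)) \<or>
           ((\<forall>x\<in>set u. k + 1 \<le> x) \<and> (\<forall>x\<in>set v. x \<le> k))"
      using \<open>P2\<close> unfolding P2_def by blast
    have w: "w = word_perm u \<circ> word_perm v" using r by (simp add: reduced_word_def wp_append)
    show ?thesis
    proof (cases "(\<forall>x\<in>set u. x \<le> k) \<and> (\<forall>x\<in>set v. k + 1 \<le> x)")
      case True
      have "Ak k w" unfolding Ak_def
      proof (intro allI impI)
        fix x assume x: "1 \<le> x" "x \<le> k"
        have "word_perm v x = x" using True x by (intro wp_fix) auto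
        moreover have "Suc k \<notin> set u" using True by auto
        ultimately show "w x \<le> Suc k" using w x L_pres[of "Suc k" u x] by simp
      qed
      then show ?thesis ..
    next
      case False
      then have F: "(\<forall>x\<in>set u. k + 1 \<le> x) \<and> (\<forall>x\<in>set v. x \<le> k)" using uv by blast
      have "Bk k w" unfolding Bk_def
      proof (intro allI impI)
        fix y assume y: "Suc (Suc k) \<le> y"
        have "word_perm v y = y" using F y by (intro wp_fix) auto
        moreover have "k \<notin> set u" using F by auto
        ultimately show "Suc k \<le> w y" using w y L_pres2[of k u y] by simp
      qed
      then show ?thesis ..
    qed
  qed
  have AnP1: "\<not> P1" if AA: "Ak k w"
  proof
    assume P1
    then obtain a where r: "reduced_word w a" and pat: "has_pattern a k (Suc k) \<or> has_pattern a (Suc k) k"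
      unfolding P1_def by auto
    obtain p q where "p < q" "q < length a" "a ! p = Suc k" "a ! q = k" using pattern_order[OF pat] by blast
    then show False using A_order[OF r AA] by blast
  qed
  have BnP1: "\<not> P1" if BB: "Bk k w"
  proof
    assume P1
    then obtain a where r: "reduced_word w a" and pat: "has_pattern a k (Suc k) \<or> has_pattern a (Suc k) k"
      unfolding P1_def by auto
    obtain p q where pq: "p < q" "q < length a" "a ! p = k" "a ! q = Suc k" using pattern_order2[OF pat] by blast
    have r': "reduced_word (inv w) (rev a)" using reduced_rev[OF r] .
    have A': "Ak k (inv w)" using B_imp_A_inv[OF fw BB] .
    have "rev a ! (length a - Suc q) = Suc k" "rev a ! (length a - Suc p) = k"
      using pq by (simp_all add: rev_nth)
    moreover have "length a - Suc q < length a - Suc p" "length a - Suc p < length (rev a)" using pq by auto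
    ultimately show False using A_order[OF r' A'] by blast
  qed
  have AP2: P2 if AA: "Ak k w"
  proof -
    obtain u v where uv: "is_word (u @ v)" "word_perm (u @ v) = w" "length (u @ v) = ninv w"
      "\<forall>x\<in>set u. x \<le> k" "\<forall>x\<in>set v. Suc k \<le> x"
      using A_split[OF fw AA] by blast
    have r: "reduced_word w (u @ v)" using len_ninv_reduced[OF uv(1-3)] .
    show P2 unfolding P2_def using r uv(4,5) by (intro exI[of _ u] exI[of _ v]) simp
  qed
  have BP2: P2 if BB: "Bk k w"
  proof -
    obtain u v where uv: "is_word (u @ v)" "word_perm (u @ v) = inv w" "length (u @ v) = ninv (inv w)"
      "\<forall>x\<in>set u. x \<le> k" "\<forall>x\<in>set v. Suc k \<le> x"
      using A_split[OF fin_perm_inv[OF fw] B_imp_A_inv[OF fw BB]] by blast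
    have "reduced_word (inv w) (u @ v)" using len_ninv_reduced[OF uv(1-3)] .
    then have "reduced_word (inv (inv w)) (rev (u @ v))" by (rule reduced_rev)
    then have r: "reduced_word w (rev v @ rev u)" using b by (simp add: inv_inv_eq)
    show P2 unfolding P2_def using r uv(4,5) by (intro exI[of _ "rev v"] exI[of _ "rev u"]) simp
  qed
  show ?thesis
  proof (cases "Ak k w \<or> Bk k w")
    case True
    then have 1: P2 using AP2 BP2 by blast
    have 2: "\<not> P1" using True AnP1 BnP1 by blast
    show ?thesis using 1 2 by blast
  next
    case False
    then have 1: "\<not> P2" using P2AB by blast
    have "\<not> Ak k w" "\<not> Bk k w" using False by auto
    then have P1 using claimC[OF fw] unfolding P1_def by simp
    then show ?thesis using 1 by blast
  qed
qed

end
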